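(* Let $X$ be a topological vector space, $Z$ a locally convex topological vector space, $C\subseteq Z$ a nonempty closed convex cone with $C^-\neq\{0\}$, and $f:X\to\mathcal{F}(Z,C)$. If $f(x_0)$ is a convex set and $\varphi_{(f,z^* )}$ is lower semicontinuous at $x_0$ for every $z^*\in C^-\setminus\{0\}$, then $f$ is lower lattice-semicontinuous at $x_0$.
   Context: $\mathcal{F}(Z,C)=\{A\subseteq Z\colon A=\operatorname{cl}(A+C)\}$ (empty set included); $C^-=\{z^*\in Z^*\colon z^*(z)\le0\ \forall z\in C\}$. $\varphi_{(f,z^* )}(x)=\inf_{z\in f(x)}(-z^*(z))$, with $\inf\emptyset=+\infty$. $f$ is lower lattice-semicontinuous at $x_0$ iff $f(x_0)\supseteq\bigcap_{U\in\mathcal{N}(x_0)}\operatorname{cl}\bigcup_{x\in U}f(x)$ ($\mathcal{N}(x_0)$ the neighborhoods of $x_0$); equivalently, for every $z_0\notin f(x_0)$ there exist a neighborhood $U$ of $x_0$ and a neighborhood $V$ of $z_0$ with $z\notin f(x)$ for all $x\in U$, $z\in V$. *)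

theory Defs
  imports "HOL-Analysis.Analysis"
begin

definition topological_vector_space :: "'a::{real_vector,topological_space} itself \<Rightarrow> bool" where
  "topological_vector_space (TYPE('a)) \<longleftrightarrow>
     continuous_on UNIV (\<lambda>p::'a \<times> 'a. fst p + snd p) \<and>
     continuous_on UNIV (\<lambda>p::real \<times> 'a. fst p *\<^sub>R snd p)"

definition locally_convex_space :: "'a::{real_vector,topological_space} itself \<Rightarrow> bool" where
  "locally_convex_space (TYPE('a)) \<longleftrightarrow>
     topological_vector_space (TYPE('a)) \<and>
     (\<forall>U::'a set. open U \<and> 0 \<in> U \<longrightarrow> (\<exists>V. open V \<and> convex V \<and> 0 \<in> V \<and> V \<subseteq> U))"

definition topological_dual :: "('a::{real_vector,topological_space} \<Rightarrow> real) set" where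
  "topological_dual = {g. linear g \<and> continuous_on UNIV g}"

definition neg_dual_cone :: "'a::{real_vector,topological_space} set \<Rightarrow> ('a \<Rightarrow> real) set" where
  "neg_dual_cone C = {g \<in> topological_dual. \<forall>z\<in>C. g z \<le> 0}"

text \<open>F(Z,C) = { A \<subseteq> Z : A = cl(A + C) } (empty set included).\<close>
definition upper_closed_sets :: "'a::{real_vector,topological_space} set \<Rightarrow> 'a set set" where
  "upper_closed_sets C = {A. A = closure {a + c | a c. a \<in> A \<and> c \<in> C}}"

text \<open>Scalarization \<phi>_(f,z*)(x) = inf_{z \<in> f x} (- z*(z)), with inf \<emptyset> = +\<infinity>.\<close>
definition scalarization :: "('x \<Rightarrow> 'z set) \<Rightarrow> ('z \<Rightarrow> real) \<Rightarrow> 'x \<Rightarrow> ereal" where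
  "scalarization f g x = (INF z\<in>f x. ereal (- g z))"

definition lsc_at_point :: "('x::topological_space \<Rightarrow> ereal) \<Rightarrow> 'x \<Rightarrow> bool" where
  "lsc_at_point \<phi> x0 \<longleftrightarrow> (\<forall>t. t < \<phi> x0 \<longrightarrow> eventually (\<lambda>x. t < \<phi> x) (nhds x0))"

definition neighbourhoods :: "'x::topological_space \<Rightarrow> 'x set set" where
  "neighbourhoods x0 = {U. \<exists>V. open V \<and> x0 \<in> V \<and> V \<subseteq> U}"

definition lower_lattice_semicontinuous_at :: "('x::topological_space \<Rightarrow> 'z::topological_space set) \<Rightarrow> 'x \<Rightarrow> bool" where
  "lower_lattice_semicontinuous_at f x0 \<longleftrightarrow>
     (\<Inter>U\<in>neighbourhoods x0. closure (\<Union>x\<in>U. f x)) \<subseteq> f x0"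

end

theory Submission
  imports Defs
begin


definition lgraphs :: "('a::real_vector \<Rightarrow> real) \<Rightarrow> ('a \<times> real) set \<Rightarrow> ('a \<times> real) set set" where
 "lgraphs p G0 = {G. G0 \<subseteq> G \<and> (\<forall>x a y b. (x,a)\<in>G \<longrightarrow> (y,b)\<in>G \<longrightarrow> (x+y, a+b) \<in> G)
   \<and> (\<forall>x a c. (x,a)\<in>G \<longrightarrow> (c *\<^sub>R x, c*a)\<in>G) \<and> (\<forall>x a b. (x,a)\<in>G \<longrightarrow> (x,b)\<in>G \<longrightarrow> a = b)
   \<and> (\<forall>x a. (x,a)\<in>G \<longrightarrow> a \<le> p x)}"

lemma extend_step:
  fixes p :: "'a::real_vector \<Rightarrow> real"
  assumes sub: "\<And>x y. p (x+y) \<le> p x + p y" and hom: "\<And>c x. c > 0 \<Longrightarrow> p (c *\<^sub>R x) = c * p x"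
    and M: "M \<in> lgraphs p G0" and x1: "\<forall>a. (x1,a) \<notin> M" and z: "(0,0) \<in> M"
  shows "\<exists>M'\<in>lgraphs p G0. M \<subseteq> M' \<and> M' \<noteq> M"
proof -
  have add: "\<And>x a y b. (x,a)\<in>M \<Longrightarrow> (y,b)\<in>M \<Longrightarrow> (x+y, a+b) \<in> M"
   and scl: "\<And>x a c. (x,a)\<in>M \<Longrightarrow> (c *\<^sub>R x, c*a)\<in>M"
   and fnc: "\<And>x a b. (x,a)\<in>M \<Longrightarrow> (x,b)\<in>M \<Longrightarrow> a = b"
   and dom: "\<And>x a. (x,a)\<in>M \<Longrightarrow> a \<le> p x" and G0: "G0 \<subseteq> M"
    using M unfolding lgraphs_def by blast+
  define S where "S = {a - p (y - x1) | y a. (y,a)\<in>M}"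
  define c where "c = Sup S"
  have key: "a - p (y - x1) \<le> p (w + x1) - b" if "(y,a)\<in>M" "(w,b)\<in>M" for y a w b
  proof -
    have "a + b \<le> p (y + w)" using dom[OF add[OF that]] .
    also have "p (y + w) \<le> p (y - x1) + p (w + x1)" using sub[of "y - x1" "w + x1"] by simp
    finally show ?thesis by simp
  qed
  have Sne: "S \<noteq> {}" using z unfolding S_def by blast
  have Sbdd: "bdd_above S" unfolding S_def bdd_above_def using key[OF _ z] by fastforce
  have c1: "a - p (y - x1) \<le> c" if "(y,a)\<in>M" for y a
    unfolding c_def by (rule cSup_upper[OF _ Sbdd]) (use that S_def in blast)
  have c2: "c \<le> p (w + x1) - b" if "(w,b)\<in>M" for w b
    unfolding c_def by (rule cSup_least[OF Sne]) (use key[OF _ that] S_def in blast)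
  define M' where "M' = {(y + t *\<^sub>R x1, a + t*c) | y a t. (y,a)\<in>M}"
  have dom': "a + t*c \<le> p (y + t *\<^sub>R x1)" if "(y,a)\<in>M" for y a t
  proof (cases "t = 0")
    case True then show ?thesis using dom[OF that] by simp
  next
    case False
    show ?thesis
    proof (cases "t > 0")
      case True
      have "(inverse t *\<^sub>R y, inverse t * a) \<in> M" using scl[OF that] .
      from c2[OF this] have "inverse t * a + c \<le> p (inverse t *\<^sub>R y + x1)" by simp
      hence "t * (inverse t * a + c) \<le> t * p (inverse t *\<^sub>R y + x1)" using True by (simp add: mult_left_mono)
      also have "t * p (inverse t *\<^sub>R y + x1) = p (t *\<^sub>R (inverse t *\<^sub>R y + x1))" using hom[OF True] by simp
      also have "t *\<^sub>R (inverse t *\<^sub>R y + x1) = y + t *\<^sub>R x1" using True by (simp add: scaleR_add_right)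
      finally show ?thesis using True by (simp add: algebra_simps)
    next
      case False2: False
      define s where "s = - t"
      have s: "s > 0" using False False2 s_def by simp
      have "(inverse s *\<^sub>R y, inverse s * a) \<in> M" using scl[OF that] .
      from c1[OF this] have "inverse s * a - c \<le> p (inverse s *\<^sub>R y - x1)" by simp
      hence "s * (inverse s * a - c) \<le> s * p (inverse s *\<^sub>R y - x1)" using s by (simp add: mult_left_mono)
      also have "s * p (inverse s *\<^sub>R y - x1) = p (s *\<^sub>R (inverse s *\<^sub>R y - x1))" using hom[OF s] by simp
      also have "s *\<^sub>R (inverse s *\<^sub>R y - x1) = y + t *\<^sub>R x1" using s s_def by (simp add: scaleR_diff_right)
      finally show ?thesis using s s_def by (simp add: algebra_simps)
    qed
  qed
  have inM': "(y + t *\<^sub>R x1, a + t*c) \<in> M'" if "(y,a)\<in>M" for y a t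
    using that unfolding M'_def by blast
  have "M' \<in> lgraphs p G0"
    unfolding lgraphs_def
  proof (intro CollectI conjI allI impI)
    show "G0 \<subseteq> M'"
    proof
      fix q assume "q \<in> G0"
      then obtain y a where q: "q = (y,a)" "(y,a) \<in> M" using G0 by (cases q) blast
      show "q \<in> M'" using inM'[OF q(2), of 0] q by simp
    qed
  next
    fix x a y b assume "(x,a) \<in> M'" "(y,b) \<in> M'"
    then obtain x' a' t y' b' s where "(x',a')\<in>M" "(y',b')\<in>M" "x = x' + t *\<^sub>R x1" "a = a' + t*c"
      "y = y' + s *\<^sub>R x1" "b = b' + s*c" unfolding M'_def by blast
    then show "(x+y, a+b) \<in> M'" using inM'[OF add, of x' a' y' b' "t+s"]
      by (simp add: algebra_simps)
  next
    fix x a r assume "(x,a) \<in> M'"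
    then obtain x' a' t where "(x',a')\<in>M" "x = x' + t *\<^sub>R x1" "a = a' + t*c"
      unfolding M'_def by blast
    then show "(r *\<^sub>R x, r*a) \<in> M'" using inM'[OF scl, of x' a' r "r*t"]
      by (simp add: algebra_simps)
  next
    fix x a b assume "(x,a) \<in> M'" "(x,b) \<in> M'"
    then obtain x' a' t y' b' s where h: "(x',a')\<in>M" "(y',b')\<in>M" "x = x' + t *\<^sub>R x1" "a = a' + t*c"
      "x = y' + s *\<^sub>R x1" "b = b' + s*c" unfolding M'_def by blast
    show "a = b"
    proof (cases "t = s")
      case True
      then have "x' = y'" using h by simp
      then show ?thesis using fnc[OF h(1)] h True by auto
    next
      case False
      have eq: "(t - s) *\<^sub>R x1 = y' - x'" using h by (simp add: algebra_simps)
      have "x1 = inverse (t - s) *\<^sub>R ((t - s) *\<^sub>R x1)" using False by simp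
      also have "\<dots> = inverse (t - s) *\<^sub>R (y' + (-1) *\<^sub>R x')" using eq by simp
      finally have "x1 = inverse (t - s) *\<^sub>R (y' + (-1) *\<^sub>R x')" .
      moreover have "(inverse (t - s) *\<^sub>R (y' + (-1) *\<^sub>R x'), inverse (t-s) * (b' + (-1) * a')) \<in> M"
        using scl[OF add[OF h(2) scl[OF h(1)]]] .
      ultimately show ?thesis using x1 by metis
    qed
  next
    fix x a assume "(x,a) \<in> M'"
    then show "a \<le> p x" using dom' unfolding M'_def by blast
  qed
  moreover have "M \<subseteq> M'" using inM'[of _ _ 0] by auto
  moreover have "(x1, c) \<in> M'" using inM'[OF z, of 1] by simp
  ultimately show ?thesis using x1 by blast
qed

lemma hahn_banach_gauge:
  fixes p :: "'a::real_vector \<Rightarrow> real"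
  assumes sub: "\<And>x y. p (x+y) \<le> p x + p y" and hom: "\<And>c x. c > 0 \<Longrightarrow> p (c *\<^sub>R x) = c * p x"
    and nn: "\<And>x. p x \<ge> 0" and pe: "p e \<ge> 1"
  shows "\<exists>g. linear g \<and> g e = 1 \<and> (\<forall>x. g x \<le> p x)"
proof -
  define G0 where "G0 = {(t *\<^sub>R e, t) | t. True}"
  have p0: "p 0 = 0" using hom[of 2 0] by simp
  have e0: "e \<noteq> 0" using pe p0 by auto
  have G0A: "G0 \<in> lgraphs p G0"
    unfolding lgraphs_def
  proof (intro CollectI conjI allI impI subset_refl)
    fix x a y b assume "(x,a) \<in> G0" "(y,b) \<in> G0"
    then show "(x+y, a+b) \<in> G0" unfolding G0_def by (auto simp: scaleR_add_left)
  next
    fix x a c assume "(x,a) \<in> G0"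
    then show "(c *\<^sub>R x, c*a) \<in> G0" unfolding G0_def by auto
  next
    fix x a b assume "(x,a) \<in> G0" "(x,b) \<in> G0"
    then show "a = b" unfolding G0_def using e0 by auto
  next
    fix x a assume "(x,a) \<in> G0"
    then have x: "x = a *\<^sub>R e" unfolding G0_def by auto
    show "a \<le> p x"
    proof (cases "a > 0")
      case True
      then have "p x = a * p e" using hom x by simp
      moreover have "a * 1 \<le> a * p e" using True pe by (intro mult_left_mono) auto
      ultimately show ?thesis by simp
    next
      case False then show ?thesis using nn[of x] by simp
    qed
  qed
  have "\<exists>M\<in>lgraphs p G0. \<forall>X\<in>lgraphs p G0. M \<subseteq> X \<longrightarrow> X = M"
  proof (rule subset_Zorn_nonempty)
    show "lgraphs p G0 \<noteq> {}" using G0A by blast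
  next
    fix CC assume ne: "CC \<noteq> {}" and ch: "subset.chain (lgraphs p G0) CC"
    have CA: "CC \<subseteq> lgraphs p G0" and tot: "\<And>X Y. X \<in> CC \<Longrightarrow> Y \<in> CC \<Longrightarrow> X \<subseteq> Y \<or> Y \<subseteq> X"
      using ch unfolding subset.chain_def by blast+
    have two: "\<exists>X\<in>CC. P \<in> X \<and> Q \<in> X" if "P \<in> \<Union>CC" "Q \<in> \<Union>CC" for P Q
      using that tot by blast
    show "\<Union>CC \<in> lgraphs p G0"
      unfolding lgraphs_def
    proof (intro CollectI conjI allI impI)
      show "G0 \<subseteq> \<Union>CC" using ne CA unfolding lgraphs_def by blast
    next
      fix x a y b assume "(x,a) \<in> \<Union>CC" "(y,b) \<in> \<Union>CC"
      then obtain X where "X \<in> CC" "(x,a) \<in> X" "(y,b) \<in> X" using two by blast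
      then show "(x+y, a+b) \<in> \<Union>CC" using CA unfolding lgraphs_def by blast
    next
      fix x a c assume "(x,a) \<in> \<Union>CC"
      then obtain X where "X \<in> CC" "(x,a) \<in> X" by blast
      then show "(c *\<^sub>R x, c*a) \<in> \<Union>CC" using CA unfolding lgraphs_def by blast
    next
      fix x a b assume "(x,a) \<in> \<Union>CC" "(x,b) \<in> \<Union>CC"
      then obtain X where "X \<in> CC" "(x,a) \<in> X" "(x,b) \<in> X" using two by blast
      then show "a = b" using CA unfolding lgraphs_def by blast
    next
      fix x a assume "(x,a) \<in> \<Union>CC"
      then obtain X where "X \<in> CC" "(x,a) \<in> X" by blast
      then show "a \<le> p x" using CA unfolding lgraphs_def by blast
    qed
  qed
  then obtain M where M: "M \<in> lgraphs p G0" and mx: "\<And>X. X\<in>lgraphs p G0 \<Longrightarrow> M \<subseteq> X \<Longrightarrow> X = M"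
    by blast
  have add: "\<And>x a y b. (x,a)\<in>M \<Longrightarrow> (y,b)\<in>M \<Longrightarrow> (x+y, a+b) \<in> M"
   and scl: "\<And>x a c. (x,a)\<in>M \<Longrightarrow> (c *\<^sub>R x, c*a)\<in>M"
   and fnc: "\<And>x a b. (x,a)\<in>M \<Longrightarrow> (x,b)\<in>M \<Longrightarrow> a = b"
   and dom: "\<And>x a. (x,a)\<in>M \<Longrightarrow> a \<le> p x" and G0: "G0 \<subseteq> M"
    using M unfolding lgraphs_def by blast+
  have z: "(0,0) \<in> M" using G0 unfolding G0_def by force
  have ex: "\<exists>a. (x,a) \<in> M" for x
  proof (rule ccontr)
    assume "\<nexists>a. (x, a) \<in> M"
    then obtain M' where "M' \<in> lgraphs p G0" "M \<subseteq> M'" "M' \<noteq> M"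
      using extend_step[OF sub hom M _ z, of x] by blast
    then show False using mx by blast
  qed
  define g where "g x = (THE a. (x,a) \<in> M)" for x
  have gM: "(x, g x) \<in> M" for x
    unfolding g_def using ex[of x] fnc by (metis theI)
  have gI: "g x = a" if "(x,a) \<in> M" for x a
    using fnc[OF that gM] by simp
  have "linear g"
    by (rule linearI) (auto intro!: gI add scl gM)
  moreover have "g e = 1" using G0 unfolding G0_def by (force intro: gI)
  moreover have "g x \<le> p x" for x using dom[OF gM] .
  ultimately show ?thesis by blast
qed



lemma tvs_scale:
  assumes "topological_vector_space TYPE('a::{real_vector,topological_space})"
  shows "continuous_on UNIV (\<lambda>y::'a. c *\<^sub>R y)"
proof -
  have m: "continuous_on UNIV (\<lambda>p::real \<times> 'a. fst p *\<^sub>R snd p)"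
    using assms unfolding topological_vector_space_def by blast
  have "continuous_on UNIV ((\<lambda>p::real \<times> 'a. fst p *\<^sub>R snd p) \<circ> (\<lambda>y. (c,y)))"
    by (rule continuous_on_compose) (auto intro!: continuous_intros intro: continuous_on_subset[OF m])
  then show ?thesis by (simp add: o_def)
qed

lemma tvs_scale_real:
  assumes "topological_vector_space TYPE('a::{real_vector,topological_space})"
  shows "continuous_on UNIV (\<lambda>t::real. t *\<^sub>R (x::'a))"
proof -
  have m: "continuous_on UNIV (\<lambda>p::real \<times> 'a. fst p *\<^sub>R snd p)"
    using assms unfolding topological_vector_space_def by blast
  have "continuous_on UNIV ((\<lambda>p::real \<times> 'a. fst p *\<^sub>R snd p) \<circ> (\<lambda>t. (t,x)))"
    by (rule continuous_on_compose) (auto intro!: continuous_intros intro: continuous_on_subset[OF m])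
  then show ?thesis by (simp add: o_def)
qed

lemma tvs_add:
  assumes "topological_vector_space TYPE('a::{real_vector,topological_space})"
  shows "continuous_on UNIV (\<lambda>y::'a. y + a)"
proof -
  have m: "continuous_on UNIV (\<lambda>p::'a \<times> 'a. fst p + snd p)"
    using assms unfolding topological_vector_space_def by blast
  have "continuous_on UNIV ((\<lambda>p::'a \<times> 'a. fst p + snd p) \<circ> (\<lambda>y. (y,a)))"
    by (rule continuous_on_compose) (auto intro!: continuous_intros intro: continuous_on_subset[OF m])
  then show ?thesis by (simp add: o_def)
qed

lemma open_pre:
  assumes "open U" "continuous_on UNIV h"
  shows "open {y. h y \<in> U}"
  using open_vimage[OF assms] by (simp add: vimage_def)

lemma tvs_affine_open:
  assumes "topological_vector_space TYPE('a::{real_vector,topological_space})" "open (U::'a set)"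
  shows "open {y. c *\<^sub>R (y + a) \<in> U}"
proof -
  have "continuous_on UNIV ((\<lambda>y::'a. c *\<^sub>R y) \<circ> (\<lambda>y. y + a))"
    by (rule continuous_on_compose) (auto intro: continuous_on_subset[OF tvs_scale[OF assms(1)]] tvs_add[OF assms(1)])
  then show ?thesis using open_pre[OF assms(2)] by (simp add: o_def)
qed

lemma tvs_open_ray:
  assumes "topological_vector_space TYPE('a::{real_vector,topological_space})" "open (U::'a set)"
    "t0 *\<^sub>R x \<in> U"
  shows "\<exists>e>0. \<forall>t. \<bar>t - t0\<bar> < e \<longrightarrow> t *\<^sub>R x \<in> U"
proof -
  have "open {t. t *\<^sub>R x \<in> U}" by (rule open_pre[OF assms(2) tvs_scale_real[OF assms(1)]])
  then obtain e where "e > 0" "\<forall>t. dist t t0 < e \<longrightarrow> t \<in> {t. t *\<^sub>R x \<in> U}"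
    using assms(3) unfolding open_dist by blast
  then show ?thesis by (auto simp: dist_real_def)
qed

lemma linear_bounded_cont:
  assumes tvs: "topological_vector_space TYPE('a::{real_vector,topological_space})"
    and lin: "linear (g::'a \<Rightarrow> real)" and U: "open U" "0 \<in> U" and b: "\<forall>u\<in>U. g u < 1"
  shows "continuous_on UNIV g"
proof -
  define N where "N = {u. u \<in> U \<and> (-1) *\<^sub>R (u + 0) \<in> U}"
  have openN: "open N" unfolding N_def
    using open_Int[OF U(1) tvs_affine_open[OF tvs U(1), of "-1" 0]] by (simp add: Collect_conj_eq)
  have Nb: "\<bar>g u\<bar> < 1" if "u \<in> N" for u
  proof -
    have "g u < 1" "g (-u) < 1" using that b unfolding N_def by auto
    moreover have "g (-u) = - g u" using linear_neg[OF lin] .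
    ultimately show ?thesis by auto
  qed
  show ?thesis
    unfolding continuous_on_topological
  proof (intro ballI allI impI)
    fix z B assume "z \<in> (UNIV::'a set)" and B: "open B" "g z \<in> B"
    then obtain e where e: "e > 0" "\<forall>r. dist r (g z) < e \<longrightarrow> r \<in> B" unfolding open_dist by blast
    define A where "A = {y. (1/e) *\<^sub>R (y + (-z)) \<in> N}"
    have "open A" unfolding A_def by (rule tvs_affine_open[OF tvs openN])
    moreover have "z \<in> A" unfolding A_def N_def using U by simp
    moreover have "g y \<in> B" if "y \<in> A" for y
    proof -
      have "\<bar>g ((1/e) *\<^sub>R (y + (-z)))\<bar> < 1" using Nb that unfolding A_def by blast
      moreover have "g ((1/e) *\<^sub>R (y + (-z))) = (g y - g z) / e"
        using lin by (simp add: linear_add linear_scale linear_neg linear_diff diff_divide_distrib)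
      ultimately have "\<bar>g y - g z\<bar> < e" using e(1) by (simp add: divide_less_eq abs_divide)
      then show ?thesis using e(2) by (simp add: dist_real_def)
    qed
    ultimately show "\<exists>A. open A \<and> z \<in> A \<and> (\<forall>y\<in>UNIV. y \<in> A \<longrightarrow> g y \<in> B)" by blast
  qed
qed



lemma gauge_exists:
  assumes tvs: "topological_vector_space TYPE('a::{real_vector,topological_space})"
    and U: "open (U::'a set)" "convex U" "0 \<in> U"
  shows "\<exists>p::'a\<Rightarrow>real. (\<forall>x y. p (x+y) \<le> p x + p y) \<and> (\<forall>c x. c > 0 \<longrightarrow> p (c *\<^sub>R x) = c * p x)
     \<and> (\<forall>x. p x \<ge> 0) \<and> (\<forall>u\<in>U. p u < 1) \<and> (\<forall>x. p x < 1 \<longrightarrow> x \<in> U)"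
proof -
  define S where "S x = {t. 0 < t \<and> (1/t) *\<^sub>R x \<in> U}" for x
  define p where "p x = Inf (S x)" for x
  have Sne: "S x \<noteq> {}" for x
  proof -
    obtain e where e: "e > 0" "\<forall>t. \<bar>t - 0\<bar> < e \<longrightarrow> t *\<^sub>R x \<in> U"
      using tvs_open_ray[OF tvs U(1), of 0 x] U(3) by auto
    have "(e/2) *\<^sub>R x \<in> U" using e by auto
    then have "2/e \<in> S x" using e unfolding S_def by simp
    then show ?thesis by blast
  qed
  have Sbdd: "bdd_below (S x)" for x unfolding S_def bdd_below_def by (rule exI[of _ 0]) auto
  have up: "t' \<in> S x" if "t \<in> S x" "t \<le> t'" for t t' x
  proof -
    have t: "t > 0" "(1/t) *\<^sub>R x \<in> U" using that unfolding S_def by auto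
    have "(t/t') *\<^sub>R ((1/t) *\<^sub>R x) + (1 - t/t') *\<^sub>R 0 \<in> U"
      using convexD[OF U(2) t(2) U(3), of "t/t'" "1 - t/t'"] t that(2) by simp
    moreover have "(t/t') *\<^sub>R ((1/t) *\<^sub>R x) + (1 - t/t') *\<^sub>R 0 = (1/t') *\<^sub>R x" using t by simp
    ultimately show ?thesis using t that(2) unfolding S_def by simp
  qed
  have pS: "p x \<le> t" if "t \<in> S x" for t x unfolding p_def by (rule cInf_lower[OF that Sbdd])
  have Sp: "t \<in> S x" if pxt: "p x < t" for t x
  proof -
    obtain s where "s \<in> S x" "s < t" using cInf_lessD[OF Sne[of x], of t] pxt unfolding p_def by blast
    then show ?thesis using up by force
  qed
  have nn: "p x \<ge> 0" for x unfolding p_def by (rule cInf_greatest[OF Sne]) (auto simp: S_def)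
  have sub: "p (x+y) \<le> p x + p y" for x y
  proof (rule field_le_epsilon)
    fix d :: real assume d: "d > 0"
    have a: "p x + d/2 \<in> S x" "p y + d/2 \<in> S y" using Sp d by auto
    define s where "s = p x + d/2" define t where "t = p y + d/2"
    have st: "s > 0" "t > 0" "(1/s) *\<^sub>R x \<in> U" "(1/t) *\<^sub>R y \<in> U" using a unfolding S_def s_def t_def by auto
    have "(s/(s+t)) *\<^sub>R ((1/s) *\<^sub>R x) + (t/(s+t)) *\<^sub>R ((1/t) *\<^sub>R y) \<in> U"
      using convexD[OF U(2) st(3) st(4), of "s/(s+t)" "t/(s+t)"] st by (simp add: add_divide_distrib[symmetric])
    moreover have "(s/(s+t)) *\<^sub>R ((1/s) *\<^sub>R x) + (t/(s+t)) *\<^sub>R ((1/t) *\<^sub>R y) = (1/(s+t)) *\<^sub>R (x+y)"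
      using st by (simp add: scaleR_add_right)
    ultimately have "s + t \<in> S (x+y)" using st unfolding S_def by simp
    then have "p (x+y) \<le> s + t" by (rule pS)
    then show "p (x+y) \<le> p x + p y + d" unfolding s_def t_def by simp
  qed
  have hom1: "p (c *\<^sub>R x) \<le> c * p x" if c: "c > 0" for c x
  proof (rule field_le_epsilon)
    fix d :: real assume d: "d > 0"
    have "p x + d/c \<in> S x" using Sp d c by auto
    then have a: "p x + d/c > 0" "(1/(p x + d/c)) *\<^sub>R x \<in> U" unfolding S_def by auto
    have "(1/(c * (p x + d/c))) *\<^sub>R (c *\<^sub>R x) = (1/(p x + d/c)) *\<^sub>R x" using c by simp
    then have "c * (p x + d/c) \<in> S (c *\<^sub>R x)" using a c unfolding S_def by simp
    then have "p (c *\<^sub>R x) \<le> c * (p x + d/c)" by (rule pS)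
    then show "p (c *\<^sub>R x) \<le> c * p x + d" using c by (simp add: algebra_simps)
  qed
  have hom: "p (c *\<^sub>R x) = c * p x" if c: "c > 0" for c x
  proof -
    have "p x = p ((1/c) *\<^sub>R (c *\<^sub>R x))" using c by simp
    also have "\<dots> \<le> (1/c) * p (c *\<^sub>R x)" using hom1[of "1/c" "c *\<^sub>R x"] c by simp
    finally have "c * p x \<le> p (c *\<^sub>R x)" using c by (simp add: field_simps)
    then show ?thesis using hom1[OF c, of x] by simp
  qed
  have lt1: "p u < 1" if uU: "u \<in> U" for u
  proof -
    obtain e where e: "e > 0" "\<forall>t. \<bar>t - 1\<bar> < e \<longrightarrow> t *\<^sub>R u \<in> U"
      using tvs_open_ray[OF tvs U(1), of 1 u] uU by auto
    define t where "t = 1 + e/2"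
    have "t *\<^sub>R u \<in> U" "t > 1" using e unfolding t_def by auto
    then have "1/t \<in> S u" unfolding S_def by simp
    then have "p u \<le> 1/t" by (rule pS)
    also have "1/t < 1" using \<open>t > 1\<close> by simp
    finally show ?thesis .
  qed
  have inU: "x \<in> U" if "p x < 1" for x
    using Sp[OF that] unfolding S_def by simp
  show ?thesis using sub hom nn lt1 inU by blast
qed



lemma separation:
  assumes tvs: "topological_vector_space TYPE('a::{real_vector,topological_space})"
    and lc: "\<forall>W::'a set. open W \<and> 0 \<in> W \<longrightarrow> (\<exists>V. open V \<and> convex V \<and> 0 \<in> V \<and> V \<subseteq> W)"
    and K: "closed (K::'a set)" "convex K" "k0 \<in> K" and z0: "z0 \<notin> K"
  shows "\<exists>g::'a\<Rightarrow>real. linear g \<and> continuous_on UNIV g \<and> (\<exists>d>0. \<forall>k\<in>K. g k + d \<le> g z0)"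
proof -
  have "open {v. 1 *\<^sub>R (v + z0) \<in> - K}" using tvs_affine_open[OF tvs open_Compl[OF K(1)], of 1 z0] by simp
  moreover have "0 \<in> {v. 1 *\<^sub>R (v + z0) \<in> - K}" using z0 by simp
  ultimately obtain V where V: "open V" "convex V" "0 \<in> V" "V \<subseteq> {v. 1 *\<^sub>R (v + z0) \<in> - K}"
    using lc by blast
  define U where "U = {w. \<exists>v\<in>V. \<exists>k\<in>K. w = v + k0 - k}"
  have Ueq: "U = (\<Union>k\<in>K. {w. 1 *\<^sub>R (w + (k - k0)) \<in> V})"
  proof (rule set_eqI, rule iffI)
    fix w assume "w \<in> U"
    then obtain v k where "v \<in> V" "k \<in> K" "w = v + k0 - k" unfolding U_def by blast
    moreover have "w + (k - k0) = v" using \<open>w = v + k0 - k\<close> by (simp add: algebra_simps)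
    ultimately have "k \<in> K" "1 *\<^sub>R (w + (k - k0)) \<in> V" by simp_all
    then show "w \<in> (\<Union>k\<in>K. {w. 1 *\<^sub>R (w + (k - k0)) \<in> V})" by blast
  next
    fix w assume "w \<in> (\<Union>k\<in>K. {w. 1 *\<^sub>R (w + (k - k0)) \<in> V})"
    then obtain k where "k \<in> K" "w + (k - k0) \<in> V" by auto
    moreover have "w = (w + (k - k0)) + k0 - k" by (simp add: algebra_simps)
    ultimately show "w \<in> U" unfolding U_def by blast
  qed
  have oU: "open U" unfolding Ueq by (intro open_UN ballI tvs_affine_open[OF tvs V(1)])
  have cU: "convex U"
    unfolding convex_def
  proof (intro ballI allI impI)
    fix x y u v :: real
    fix x y assume "x \<in> U" "y \<in> U"
    then obtain v1 k1 v2 k2 where h: "v1 \<in> V" "k1 \<in> K" "x = v1 + k0 - k1" "v2 \<in> V" "k2 \<in> K" "y = v2 + k0 - k2"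
      unfolding U_def by blast
    fix a b :: real assume ab: "0 \<le> a" "0 \<le> b" "a + b = 1"
    have "a *\<^sub>R v1 + b *\<^sub>R v2 \<in> V" using convexD[OF V(2) h(1) h(4) ab] .
    moreover have "a *\<^sub>R k1 + b *\<^sub>R k2 \<in> K" using convexD[OF K(2) h(2) h(5) ab] .
    moreover have "a *\<^sub>R x + b *\<^sub>R y = (a *\<^sub>R v1 + b *\<^sub>R v2) + k0 - (a *\<^sub>R k1 + b *\<^sub>R k2)"
    proof -
      have "a *\<^sub>R x + b *\<^sub>R y = (a *\<^sub>R v1 + b *\<^sub>R v2) + (a + b) *\<^sub>R k0 - (a *\<^sub>R k1 + b *\<^sub>R k2)"
        unfolding h(3) h(6) by (simp add: algebra_simps)
      then show ?thesis using ab by simp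
    qed
    ultimately show "a *\<^sub>R x + b *\<^sub>R y \<in> U" unfolding U_def by blast
  qed
  have U0: "0 \<in> U" unfolding U_def using V(3) K(3) by force
  define e where "e = k0 - z0"
  have eU: "e \<notin> U"
  proof
    assume "e \<in> U"
    then obtain v k where "v \<in> V" "k \<in> K" "e = v + k0 - k" unfolding U_def by blast
    then have "k = v + z0" unfolding e_def by (simp add: algebra_simps)
    then show False using V(4) \<open>v \<in> V\<close> \<open>k \<in> K\<close> by auto
  qed
  obtain p where p: "\<forall>x y. p (x+y) \<le> p x + p y" "\<forall>c x. c > 0 \<longrightarrow> p (c *\<^sub>R x) = c * p x"
     "\<forall>x. p x \<ge> 0" "\<forall>u\<in>U. p u < 1" "\<forall>x. p x < 1 \<longrightarrow> x \<in> U"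
    using gauge_exists[OF tvs oU cU U0] by blast
  have "p e \<ge> 1" using p(5) eU by force
  then obtain g where g: "linear g" "g e = 1" "\<forall>x. g x \<le> p x"
    using hahn_banach_gauge[of p e] p(1-3) by blast
  have gU: "\<forall>u\<in>U. g u < 1" using g(3) p(4) by (meson le_less_trans)
  have cg: "continuous_on UNIV g" by (rule linear_bounded_cont[OF tvs g(1) oU U0 gU])
  obtain r where r: "r > 0" "\<forall>t. \<bar>t - 0\<bar> < r \<longrightarrow> t *\<^sub>R e \<in> V"
    using tvs_open_ray[OF tvs V(1), of 0 e] V(3) by auto
  define s where "s = r/2"
  have s: "s > 0" "s *\<^sub>R e \<in> V" using r unfolding s_def by auto
  have "(-g) k + s \<le> (-g) z0" if k: "k \<in> K" for k
  proof -
    have "s *\<^sub>R e + k0 - k \<in> U" unfolding U_def using s k by blast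
    then have "g (s *\<^sub>R e + k0 - k) < 1" using gU by blast
    moreover have "g (s *\<^sub>R e + k0 - k) = s + g k0 - g k"
      using g(1,2) by (simp add: linear_add linear_diff linear_scale)
    moreover have "g k0 - g z0 = 1" using g(1,2) unfolding e_def by (simp add: linear_diff)
    ultimately show ?thesis by simp
  qed
  moreover have "linear (-g)" using g(1) by (simp add: linear_compose_neg fun_Compl_def)
  moreover have "continuous_on UNIV (-g)" using continuous_on_minus[OF cg] by (simp add: fun_Compl_def)
  ultimately have "linear (-g) \<and> continuous_on UNIV (-g) \<and> (\<exists>d>0. \<forall>k\<in>K. (-g) k + d \<le> (-g) z0)"
    using s(1) by blast
  then show ?thesis by blast
qed



theorem mainTheorem15:
  fixes f :: "'x::{real_vector,topological_space} \<Rightarrow> 'z::{real_vector,topological_space} set"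
    and C :: "'z set" and x0 :: 'x
  assumes "topological_vector_space TYPE('x)"
    and "locally_convex_space TYPE('z)"
    and "C \<noteq> {}" and "closed C" and "convex C" and "cone C"
    and "neg_dual_cone C \<noteq> {(\<lambda>_. 0)}"
    and "\<forall>x. f x \<in> upper_closed_sets C"
    and "convex (f x0)"
    and "\<forall>g\<in>neg_dual_cone C - {(\<lambda>_. 0)}. lsc_at_point (scalarization f g) x0"
  shows "lower_lattice_semicontinuous_at f x0"
proof -
  note lcs = assms(2)[unfolded locally_convex_space_def]
  have tvs: "topological_vector_space TYPE('z)" using lcs by blast
  have lc: "\<forall>W::'z set. open W \<and> 0 \<in> W \<longrightarrow> (\<exists>V. open V \<and> convex V \<and> 0 \<in> V \<and> V \<subseteq> W)" using lcs by blast
  define K where "K = f x0"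
  have "f x0 \<in> upper_closed_sets C" using assms(8) by blast
  hence Keq: "K = closure {a + c | a c. a \<in> K \<and> c \<in> C}"
    unfolding upper_closed_sets_def mem_Collect_eq K_def .
  have Kcl: "closed K" by (subst Keq) (rule closed_closure)
  have KC: "k + c \<in> K" if "k \<in> K" "c \<in> C" for k c
  proof -
    have "k + c \<in> {a + c | a c. a \<in> K \<and> c \<in> C}" using that by blast
    then have "k + c \<in> closure {a + c | a c. a \<in> K \<and> c \<in> C}" by (rule subsetD[OF closure_subset])
    then show ?thesis by (subst Keq)
  qed
  show ?thesis unfolding lower_lattice_semicontinuous_at_def
  proof
    fix z0 assume z0: "z0 \<in> (\<Inter>U\<in>neighbourhoods x0. closure (\<Union>x\<in>U. f x))"
    show "z0 \<in> f x0"
    proof (rule ccontr)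
      assume nz: "z0 \<notin> f x0"
      have "\<exists>g d. g \<in> neg_dual_cone C - {(\<lambda>_. 0)} \<and> d > 0 \<and> ereal (- g z0 + d) \<le> scalarization f g x0"
      proof (cases "K = {}")
        case True
        have lz: "linear (\<lambda>_::'z. 0::real)" by (rule linearI) auto
        have "(\<lambda>_. 0) \<in> neg_dual_cone C" unfolding neg_dual_cone_def topological_dual_def
          using lz by auto
        then obtain g where "g \<in> neg_dual_cone C - {(\<lambda>_. 0)}" using assms(7) by blast
        moreover have "scalarization f g x0 = \<infinity>" unfolding scalarization_def using True K_def by (simp add: top_ereal_def)
        ultimately show ?thesis by (intro exI[of _ g] exI[of _ 1]) auto
      next
        case False
        then obtain k0 where k0: "k0 \<in> K" by blast
        obtain g :: "'z \<Rightarrow> real" and d where g: "linear g" "continuous_on UNIV g" "d > 0" "\<forall>k\<in>K. g k + d \<le> g z0"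
          using separation[OF tvs lc Kcl assms(9)[folded K_def] k0 nz[folded K_def]] by blast
        have gC: "g c \<le> 0" if c: "c \<in> C" for c
        proof (rule ccontr)
          assume "\<not> g c \<le> 0"
          then have gc: "g c > 0" by simp
          define t where "t = (g z0 - g k0) / g c"
          have t0: "t \<ge> 0" using g(3,4) k0 gc unfolding t_def by force
          have "k0 + t *\<^sub>R c \<in> K" using KC[OF k0] assms(6) c t0 unfolding cone_def by blast
          then have "g (k0 + t *\<^sub>R c) + d \<le> g z0" using g(4) by blast
          moreover have "g (k0 + t *\<^sub>R c) = g z0" using g(1) gc unfolding t_def
            by (simp add: linear_add linear_scale)
          ultimately show False using g(3) by simp
        qed
        have gnz: "g \<noteq> (\<lambda>_. 0)"
        proof
          assume "g = (\<lambda>_. 0)" then show False using g(3,4) k0 by auto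
        qed
        have "g \<in> neg_dual_cone C" unfolding neg_dual_cone_def topological_dual_def using g(1,2) gC by blast
        moreover have "ereal (- g z0 + d) \<le> scalarization f g x0"
          unfolding scalarization_def K_def[symmetric]
        proof (rule INF_greatest)
          fix k assume "k \<in> K" then show "ereal (- g z0 + d) \<le> ereal (- g k)" using g(4) by auto
        qed
        ultimately show ?thesis using gnz g(3) by blast
      qed
      then obtain g d where gd: "g \<in> neg_dual_cone C - {(\<lambda>_. 0)}" "d > 0" "ereal (- g z0 + d) \<le> scalarization f g x0"
        by blast
      have cg: "continuous_on UNIV g" using gd(1) unfolding neg_dual_cone_def topological_dual_def by blast
      have "ereal (- g z0 + d/2) < ereal (- g z0 + d)" using gd(2) by simp
      then have "ereal (- g z0 + d/2) < scalarization f g x0" using gd(3) by (rule less_le_trans)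
      then have "eventually (\<lambda>x. ereal (- g z0 + d/2) < scalarization f g x) (nhds x0)"
        using assms(10) gd(1) unfolding lsc_at_point_def by blast
      then obtain W where W: "open W" "x0 \<in> W" "\<forall>x\<in>W. ereal (- g z0 + d/2) < scalarization f g x"
        unfolding eventually_nhds by blast
      have "W \<in> neighbourhoods x0" unfolding neighbourhoods_def using W by blast
      then have zc: "z0 \<in> closure (\<Union>x\<in>W. f x)" using z0 by blast
      define Ob where "Ob = {z. g z \<in> {g z0 - d/2 <..}}"
      have oO: "open Ob" unfolding Ob_def by (rule open_pre[OF _ cg]) simp
      have "Ob \<inter> (\<Union>x\<in>W. f x) = {}"
      proof (rule ccontr)
        assume "Ob \<inter> (\<Union>x\<in>W. f x) \<noteq> {}"
        then obtain z x where zx: "z \<in> Ob" "x \<in> W" "z \<in> f x" by blast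
        have "scalarization f g x \<le> ereal (- g z)" unfolding scalarization_def using zx(3) by (rule INF_lower)
        moreover have "ereal (- g z) < ereal (- g z0 + d/2)" using zx(1) unfolding Ob_def by simp
        ultimately show False using W(3) zx(2) by (meson less_le_trans less_asym)
      qed
      then have "Ob \<inter> closure (\<Union>x\<in>W. f x) = {}" using open_Int_closure_eq_empty[OF oO] by blast
      moreover have "z0 \<in> Ob" unfolding Ob_def using gd(2) by simp
      ultimately show False using zc by blast
    qed
  qed
qed


end
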